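(* Let $\mu$ be a positive measure on $\mathbb{R}^n$ absolutely continuous with respect to Lebesgue measure, let $Q_0$ be a cube with $0<\mu(Q_0)<\infty$, let $0<\varepsilon<2$, and let $f\in GR_\mu(\varepsilon)$ on $Q_0$. Then for every $\lambda$ with $\varepsilon<\lambda<2$, every $\rho$ with $0<\rho<1-\lambda/2$, and every $0<t\le\rho\mu(Q_0)$, $$f_\mu^{**}(t)\le\Big(B(n)\frac{\lambda/\rho+1}{\lambda-\varepsilon}\,\varepsilon+1\Big)f_\mu^*(t).$$
   Context: For a cube $Q$ with $0<\mu(Q)<\infty$ and $f$ $\mu$-integrable on $Q$, define $f_{Q,\mu}=\frac{1}{\mu(Q)}\int_Q f\,d\mu$ and $\Omega_\mu(f;Q)=\frac{1}{\mu(Q)}\int_Q |f(x)-f_{Q,\mu}|\,d\mu(x)$. A nonnegative function $f$, $\mu$-integrable on $Q_0$, belongs to $GR_\mu(\varepsilon)$ (on $Q_0$) if $\Omega_\mu(f;Q)\le\varepsilon f_{Q,\mu}$ for every cube $Q\subset Q_0$ (for which the averages are defined). The non-increasing rearrangement of $f$ on $Q_0$ with respect to $\mu$ is $f_\mu^*(t)=\sup_{E\subset Q_0,\ \mu(E)=t}\inf_{x\in E}|f(x)|$ for $0<t<\mu(Q_0)$, and $f_\mu^{**}(t)=t^{-1}\int_0^t f_\mu^*(\tau)\,d\tau$. $B(n)$ is the dimensional constant of the following covering lemma (Mateu–Mattila–Nicolau–Orobitg), valid for every such $\mu$: if $E\subset Q_0$ and $\mu(E)\le\rho\mu(Q_0)$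 with $0<\rho<1$, then there is a sequence of cubes $Q_i\subset Q_0$ with $\mu(Q_i\cap E)=\rho\mu(Q_i)$ for each $i$, such that every point of $Q_0$ belongs to at most $B(n)$ of the cubes $Q_i$, and the set of $\mu$-density points of $E$ is contained in $\bigcup_i Q_i$. *)

theory Defs
  imports "HOL-Analysis.Analysis"
begin

definition is_cube :: "(real ^ 'n) set \<Rightarrow> bool" where
  "is_cube Q \<longleftrightarrow> (\<exists>a l. 0 < l \<and> Q = cbox a (a + l *\<^sub>R One))"

definition centered_cube :: "real ^ 'n \<Rightarrow> real \<Rightarrow> (real ^ 'n) set" where
  "centered_cube x r = cbox (x - r *\<^sub>R One) (x + r *\<^sub>R One)"

definition admissible_measure :: "(real ^ 'n) measure \<Rightarrow> bool" where
  "admissible_measure M \<longleftrightarrow> sets M = sets lborel \<and> absolutely_continuous lborel M"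

definition avg :: "(real ^ 'n) measure \<Rightarrow> (real ^ 'n) set \<Rightarrow> (real ^ 'n \<Rightarrow> real) \<Rightarrow> real" where
  "avg M Q f = (1 / measure M Q) * (LINT x:Q|M. f x)"

definition osc :: "(real ^ 'n) measure \<Rightarrow> (real ^ 'n) set \<Rightarrow> (real ^ 'n \<Rightarrow> real) \<Rightarrow> real" where
  "osc M Q f = (1 / measure M Q) * (LINT x:Q|M. \<bar>f x - avg M Q f\<bar>)"

definition GR :: "(real ^ 'n) measure \<Rightarrow> (real ^ 'n) set \<Rightarrow> real \<Rightarrow> (real ^ 'n \<Rightarrow> real) \<Rightarrow> bool" where
  "GR M Q0 eps f \<longleftrightarrow>
     (\<forall>x\<in>Q0. 0 \<le> f x) \<and> set_integrable M Q0 f \<and>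
     (\<forall>Q. is_cube Q \<and> Q \<subseteq> Q0 \<and> 0 < measure M Q \<longrightarrow> osc M Q f \<le> eps * avg M Q f)"

definition rearr :: "(real ^ 'n) measure \<Rightarrow> (real ^ 'n) set \<Rightarrow> (real ^ 'n \<Rightarrow> real) \<Rightarrow> real \<Rightarrow> real" where
  "rearr M Q0 f t = Sup {Inf ((\<lambda>x. \<bar>f x\<bar>) ` E) | E. E \<in> sets M \<and> E \<subseteq> Q0 \<and> measure M E = t}"

definition rearr2 :: "(real ^ 'n) measure \<Rightarrow> (real ^ 'n) set \<Rightarrow> (real ^ 'n \<Rightarrow> real) \<Rightarrow> real \<Rightarrow> real" where
  "rearr2 M Q0 f t = (1 / t) * (LBINT \<tau>=0..t. rearr M Q0 f \<tau>)"

definition density_point :: "(real ^ 'n) measure \<Rightarrow> (real ^ 'n) set \<Rightarrow> real ^ 'n \<Rightarrow> bool" where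
  "density_point M E x \<longleftrightarrow>
     ((\<lambda>r. measure M (E \<inter> centered_cube x r) / measure M (centered_cube x r)) \<longlongrightarrow> 1) (at_right 0)"

text \<open>B is a valid constant for the Mateu-Mattila-Nicolau-Orobitg covering lemma in
  dimension n (the dimension is the type 'n).\<close>
definition covering_constant :: "nat \<Rightarrow> ('n::finite) itself \<Rightarrow> bool" where
  "covering_constant B (_ :: ('n::finite) itself) \<longleftrightarrow>
     (\<forall>(M :: (real ^ 'n) measure) Q0 E rho.
        admissible_measure M \<and> is_cube Q0 \<and> 0 < emeasure M Q0 \<and> emeasure M Q0 < \<infinity> \<and>
        E \<in> sets M \<and> E \<subseteq> Q0 \<and> 0 < rho \<and> rho < 1 \<and> measure M E \<le> rho * measure M Q0 \<longrightarrow>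
        (\<exists>(I :: nat set) (Qs :: nat \<Rightarrow> (real ^ 'n) set).
           (\<forall>i\<in>I. is_cube (Qs i) \<and> Qs i \<subseteq> Q0 \<and> measure M (Qs i \<inter> E) = rho * measure M (Qs i)) \<and>
           (\<forall>x\<in>Q0. finite {i\<in>I. x \<in> Qs i} \<and> card {i\<in>I. x \<in> Qs i} \<le> B) \<and>
           {x. density_point M E x} \<subseteq> (\<Union>i\<in>I. Qs i)))"

end

theory Submission
  imports Defs "HOL-Analysis.Analysis"
begin

lemma layer_cake:
  fixes h :: "'a \<Rightarrow> real"
  assumes sf: "sigma_finite_measure N" and hm[measurable]: "h \<in> borel_measurable N"
    and nn: "\<And>x. x \<in> space N \<Longrightarrow> 0 \<le> h x"
  shows "(\<integral>\<^sup>+x. ennreal (h x) \<partial>N) =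
     (\<integral>\<^sup>+c. indicator {0<..} c * emeasure N {x\<in>space N. c < h x} \<partial>lborel)"
proof -
  interpret pair_sigma_finite N lborel
    using sf by (simp add: pair_sigma_finite_def lborel.sigma_finite_measure_axioms)
  have "(\<integral>\<^sup>+x. ennreal (h x) \<partial>N) = (\<integral>\<^sup>+x. (\<integral>\<^sup>+c. indicator {0<..<h x} c \<partial>lborel) \<partial>N)"
    apply (rule nn_integral_cong)
    using nn by (auto simp: nn_integral_indicator)
  also have "\<dots> = (\<integral>\<^sup>+x. (\<integral>\<^sup>+c. indicator {(x,c). 0 < c \<and> c < h x} (x,c) \<partial>lborel) \<partial>N)"
    by (intro nn_integral_cong) (auto simp: indicator_def)
  also have "\<dots> = (\<integral>\<^sup>+c. (\<integral>\<^sup>+x. indicator {(x,c). 0 < c \<and> c < h x} (x,c) \<partial>N) \<partial>lborel)"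
    by (rule Fubini'[symmetric]) measurable
  also have "\<dots> = (\<integral>\<^sup>+c. indicator {0<..} c * emeasure N {x\<in>space N. c < h x} \<partial>lborel)"
  proof (rule nn_integral_cong)
    fix c :: real
    have "(\<integral>\<^sup>+x. indicator {(x,c). 0 < c \<and> c < h x} (x,c) \<partial>N) =
          (\<integral>\<^sup>+x. indicator {0<..} c * indicator {x\<in>space N. c < h x} x \<partial>N)"
      by (intro nn_integral_cong) (auto simp: indicator_def)
    also have "\<dots> = indicator {0<..} c * emeasure N {x\<in>space N. c < h x}"
      by (subst nn_integral_cmult) (auto)
    finally show "(\<integral>\<^sup>+x. indicator {(x,c). 0 < c \<and> c < h x} (x,c) \<partial>N) = indicator {0<..} c * emeasure N {x\<in>space N. c < h x}" .
  qed
  finally show ?thesis .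
qed

lemma hyperplane_null_M:
  fixes M :: "(real ^ 'n) measure"
  assumes adm: "admissible_measure M"
  shows "{x. x$i = c} \<in> null_sets M"
proof -
  have "{x::real^'n. x$i = c} = {x. axis i 1 \<bullet> x = c}"
    by (auto simp: cart_eq_inner_axis inner_commute)
  then have "negligible {x::real^'n. x$i = c}"
    by (metis negligible_hyperplane axis_nth zero_neq_one vec_eq_iff zero_index)
  moreover have "{x::real^'n. x$i = c} \<in> sets borel"
    by (intro borel_closed closed_Collect_eq continuous_intros)
  ultimately have "{x::real^'n. x$i = c} \<in> null_sets lborel"
    by (auto simp: null_sets_completion_iff negligible_iff_null_sets)
  then show ?thesis using adm unfolding admissible_measure_def absolutely_continuous_def by auto
qed

lemma inv_suc_mono: "m \<le> n \<Longrightarrow> 1 / real (Suc n) \<le> 1 / real (Suc m)"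
  by (rule divide_left_mono) auto

lemma exists_subset_measure:
  fixes M :: "(real ^ 'n) measure"
  assumes adm: "admissible_measure M" and F: "F \<in> sets M" and bF: "bounded F"
    and fin: "emeasure M F < \<infinity>" and t0: "0 \<le> \<tau>" and tF: "\<tau> \<le> measure M F"
  shows "\<exists>G\<in>sets M. G \<subseteq> F \<and> measure M G = \<tau>"
proof (cases "\<tau> = measure M F")
  case True then show ?thesis using F by blast
next
  case False
  with tF have tl: "\<tau> < measure M F" by simp
  have sM: "sets M = sets borel" using adm by (simp add: admissible_measure_def)
  obtain i :: 'n where True by simp
  obtain b where b: "\<And>x. x \<in> F \<Longrightarrow> norm x \<le> b" using bF by (auto simp: bounded_iff)
  have bi: "\<bar>x$i\<bar> \<le> b" if "x \<in> F" for x using b[OF that] component_le_norm_cart[of x i] by simp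
  define H where "H a = F \<inter> {x. x$i \<le> a}" for a
  define phi where "phi a = measure M (H a)" for a
  have hs: "{x::real^'n. x$i \<le> a} \<in> sets M" for a
    unfolding sM by (intro borel_closed closed_Collect_le continuous_intros)
  have hs2: "{x::real^'n. x$i < a} \<in> sets M" for a
    unfolding sM by (intro borel_open open_Collect_less continuous_intros)
  have Hs: "H a \<in> sets M" for a unfolding H_def using F hs by auto
  have Hfin: "emeasure M (H a) \<noteq> \<infinity>" for a
    using emeasure_mono[of "H a" F M] F fin unfolding H_def by (auto simp: top_unique)
  have mono: "phi a \<le> phi a'" if "a \<le> a'" for a a'
    unfolding phi_def using that Hs Hfin
    by (intro measure_mono_fmeasurable) (auto simp: H_def fmeasurable_def less_top)
  define S where "S = {a. phi a \<le> \<tau>}"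
  have "H (-b-1) = {}" unfolding H_def using bi by force
  then have m1: "-b-1 \<in> S" unfolding S_def phi_def using t0 by simp
  have Hb: "H b = F" unfolding H_def using bi by force
  have Sb: "a \<le> b" if "a \<in> S" for a
  proof (rule ccontr)
    assume "\<not> a \<le> b"
    then have "phi b \<le> phi a" by (intro mono) simp
    then show False using that tl Hb unfolding S_def phi_def by simp
  qed
  have ne: "S \<noteq> {}" using m1 by blast
  have bdd: "bdd_above S" using Sb by (auto simp: bdd_above_def)
  define a0 where "a0 = Sup S"
  have up: "\<tau> \<le> phi a0"
  proof -
    define A where "A n = H (a0 + 1 / Suc n)" for n
    have "(\<lambda>n. measure M (A n)) \<longlonglongrightarrow> measure M (\<Inter>n. A n)"
    proof (rule Lim_measure_decseq)
      show "range A \<subseteq> sets M" using Hs by (auto simp: A_def)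
      show "decseq A" unfolding A_def H_def decseq_def
        using inv_suc_mono by (auto intro: order.trans add_left_mono)
      show "emeasure M (A n) \<noteq> \<infinity>" for n using Hfin by (simp add: A_def)
    qed
    moreover have "(\<Inter>n. A n) = H a0"
    proof
      show "H a0 \<subseteq> \<Inter> (range A)" unfolding A_def H_def by (auto intro!: add_increasing2)
      show "\<Inter> (range A) \<subseteq> H a0"
      proof
        fix x assume x: "x \<in> \<Inter> (range A)"
        have "x$i \<le> a0"
        proof (rule ccontr)
          assume "\<not> x$i \<le> a0"
          then obtain n where "1 / Suc n < x$i - a0"
            by (metis diff_gt_0_iff_gt linorder_not_le nat_approx_posE of_nat_Suc)
          moreover have "x \<in> A n" using x by blast
          ultimately show False by (auto simp: A_def H_def)
        qed
        with x show "x \<in> H a0" by (auto simp: A_def H_def)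
      qed
    qed
    moreover have "\<tau> \<le> measure M (A n)" for n
    proof -
      have "a0 + 1 / Suc n \<notin> S"
        using cSup_upper[OF _ bdd, of "a0 + 1 / Suc n"] unfolding a0_def[symmetric] by force
      then show ?thesis by (simp add: S_def phi_def A_def)
    qed
    ultimately show ?thesis unfolding phi_def by (metis LIMSEQ_le_const)
  qed
  have down: "phi a0 \<le> \<tau>"
  proof -
    define A where "A n = H (a0 - 1 / Suc n)" for n
    have "(\<lambda>n. measure M (A n)) \<longlonglongrightarrow> measure M (\<Union>n. A n)"
    proof (rule Lim_measure_incseq)
      show "range A \<subseteq> sets M" using Hs by (auto simp: A_def)
      show "incseq A" unfolding A_def H_def incseq_def
        using inv_suc_mono by (auto intro: order.trans diff_left_mono)
      have "(\<Union>n. A n) \<subseteq> F" by (auto simp: A_def H_def)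
      then show "emeasure M (\<Union>n. A n) \<noteq> \<infinity>"
        using emeasure_mono[of "\<Union>n. A n" F M] F fin by (auto simp: top_unique)
    qed
    moreover have UA: "(\<Union>n. A n) = F \<inter> {x. x$i < a0}"
    proof
      have "a0 - 1 / real (Suc n) < a0" for n by simp
      then show "(\<Union>n. A n) \<subseteq> F \<inter> {x. x$i < a0}" unfolding A_def H_def
        using le_less_trans by blast
      show "F \<inter> {x. x$i < a0} \<subseteq> (\<Union>n. A n)"
      proof
        fix x assume x: "x \<in> F \<inter> {x. x$i < a0}"
        then obtain n where "1 / Suc n < a0 - x$i"
          by (metis diff_gt_0_iff_gt nat_approx_posE of_nat_Suc mem_Collect_eq IntD2)
        then have "x \<in> A n" using x by (auto simp: A_def H_def)
        then show "x \<in> (\<Union>n. A n)" by blast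
      qed
    qed
    moreover have "measure M (A n) \<le> \<tau>" for n
    proof -
      obtain a where "a \<in> S" "a0 - 1 / Suc n < a"
        using less_cSup_iff[OF ne bdd, of "a0 - 1 / Suc n"] unfolding a0_def[symmetric] by auto
      then have "phi (a0 - 1 / Suc n) \<le> phi a" "phi a \<le> \<tau>" by (auto intro: mono simp: S_def)
      then show ?thesis by (simp add: A_def phi_def)
    qed
    ultimately have "measure M (F \<inter> {x. x$i < a0}) \<le> \<tau>" by (metis LIMSEQ_le_const2)
    moreover have "H a0 = (F \<inter> {x. x$i < a0}) \<union> (F \<inter> {x. x$i = a0})" by (auto simp: H_def)
    moreover have "F \<inter> {x. x$i = a0} \<in> null_sets M"
      using hyperplane_null_M[OF adm, of i a0] F by (rule null_set_Int1)
    ultimately show ?thesis unfolding phi_def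
      using measure_Un_null_set[of "F \<inter> {x. x$i < a0}" M] F hs2 by auto
  qed
  show ?thesis using up down Hs by (intro bexI[of _ "H a0"]) (auto simp: phi_def H_def)
qed

locale GRset =
  fixes M :: "(real ^ 'n) measure" and Q0 :: "(real ^ 'n) set" and f :: "real ^ 'n \<Rightarrow> real"
  assumes adm: "admissible_measure M"
    and Q0s: "Q0 \<in> sets M" and bQ0: "bounded Q0" and finQ0: "emeasure M Q0 < \<infinity>"
    and fnn: "\<And>x. x \<in> Q0 \<Longrightarrow> 0 \<le> f x" and fint: "set_integrable M Q0 f"
begin

definition "Sset \<tau> = {Inf ((\<lambda>x. \<bar>f x\<bar>) ` E) | E. E \<in> sets M \<and> E \<subseteq> Q0 \<and> measure M E = \<tau>}"

lemma rearr_eq: "rearr M Q0 f \<tau> = Sup (Sset \<tau>)"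
  by (simp add: rearr_def Sset_def)

lemma sM: "sets M = sets borel" using adm by (simp add: admissible_measure_def)
lemma spM: "space M = UNIV" using sets_eq_imp_space_eq[OF sM] by simp

lemma fin_sub: "A \<subseteq> Q0 \<Longrightarrow> A \<in> sets M \<Longrightarrow> emeasure M A < \<infinity>"
  using emeasure_mono[of A Q0 M] Q0s finQ0 by (auto simp: top_unique less_top)

lemma gmeas[measurable]: "(\<lambda>x. indicator Q0 x * f x) \<in> borel_measurable M"
  using fint unfolding set_integrable_def by (simp add: integrable_iff_bounded)

lemma gint: "integrable M (\<lambda>x. indicator Q0 x * f x)"
  using fint unfolding set_integrable_def by simp

lemma Lc_sets: "{x\<in>Q0. c < f x} \<in> sets M"
proof -
  have "{x\<in>Q0. c < f x} = Q0 \<inter> {x\<in>space M. c < indicator Q0 x * f x}"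
    by (auto simp: spM indicator_def)
  also have "\<dots> \<in> sets M" using Q0s by measurable
  finally show ?thesis .
qed

lemma Lc_sets': "{x\<in>Q0. c \<le> f x} \<in> sets M"
proof -
  have "{x\<in>Q0. c \<le> f x} = Q0 \<inter> {x\<in>space M. c \<le> indicator Q0 x * f x}"
    by (auto simp: spM indicator_def)
  also have "\<dots> \<in> sets M" using Q0s by measurable
  finally show ?thesis .
qed

definition "K = (LINT x:Q0|M. \<bar>f x\<bar>)"

lemma Sset_le: assumes "0 < \<tau>" "v \<in> Sset \<tau>" shows "v \<le> K / \<tau>"
proof -
  obtain G where G: "G \<in> sets M" "G \<subseteq> Q0" "measure M G = \<tau>" and v: "v = Inf ((\<lambda>x. \<bar>f x\<bar>) ` G)"
    using assms(2) unfolding Sset_def by auto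
  have "G \<noteq> {}" using G assms(1) by auto
  have vle: "v \<le> \<bar>f x\<bar>" if "x \<in> G" for x
    unfolding v using that by (intro cInf_lower) (auto intro: bdd_belowI[where m=0])
  have Gfin: "emeasure M G < \<infinity>" using fin_sub G by auto
  have i1: "integrable M (\<lambda>x. indicator G x * v)"
    using G Gfin by (intro integrable_mult_left) (auto)
  have i2: "integrable M (\<lambda>x. indicator Q0 x * \<bar>f x\<bar>)"
    using set_integrable_abs[OF fint] unfolding set_integrable_def by simp
  have "v * \<tau> = (LINT x|M. indicator G x * v)"
    using G by (simp add: spM)
  also have "\<dots> \<le> (LINT x|M. indicator Q0 x * \<bar>f x\<bar>)"
    using i1 i2 vle G(2) by (intro integral_mono) (auto simp: indicator_def)
  also have "\<dots> = K" unfolding K_def set_lebesgue_integral_def by simp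
  finally show ?thesis using assms(1) by (simp add: field_simps)
qed

lemma Sset_bdd: "0 < \<tau> \<Longrightarrow> bdd_above (Sset \<tau>)"
  using Sset_le by (auto simp: bdd_above_def)

lemma Sset_ne: assumes "0 < \<tau>" "\<tau> \<le> measure M Q0" shows "Sset \<tau> \<noteq> {}"
proof -
  obtain G where "G \<in> sets M" "G \<subseteq> Q0" "measure M G = \<tau>"
    using exists_subset_measure[OF adm Q0s bQ0 finQ0, of \<tau>] assms by auto
  then show ?thesis unfolding Sset_def by auto
qed

lemma Sset_nonneg: assumes "0 < \<tau>" "v \<in> Sset \<tau>" shows "0 \<le> v"
proof -
  obtain G where G: "G \<in> sets M" "G \<subseteq> Q0" "measure M G = \<tau>" and v: "v = Inf ((\<lambda>x. \<bar>f x\<bar>) ` G)"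
    using assms(2) unfolding Sset_def by auto
  have "G \<noteq> {}" using G assms(1) by auto
  then show ?thesis unfolding v by (intro cInf_greatest) auto
qed

lemma rearr_nonneg: assumes "0 < \<tau>" "\<tau> \<le> measure M Q0" shows "0 \<le> rearr M Q0 f \<tau>"
proof -
  obtain v where "v \<in> Sset \<tau>" using Sset_ne[OF assms] by auto
  then show ?thesis unfolding rearr_eq
    using Sset_nonneg[OF assms(1)] cSup_upper[OF _ Sset_bdd[OF assms(1)]] by (meson order_trans)
qed

lemma K1: assumes "0 < \<tau>" "\<tau> \<le> measure M Q0" "c < rearr M Q0 f \<tau>"
  shows "\<tau> \<le> measure M {x\<in>Q0. c < f x}"
proof -
  obtain v where "v \<in> Sset \<tau>" "c < v"
    using assms(3) less_cSup_iff[OF Sset_ne[OF assms(1,2)] Sset_bdd[OF assms(1)]]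
    unfolding rearr_eq by auto
  then obtain G where G: "G \<in> sets M" "G \<subseteq> Q0" "measure M G = \<tau>" and v: "c < Inf ((\<lambda>x. \<bar>f x\<bar>) ` G)"
    unfolding Sset_def by auto
  have "G \<subseteq> {x\<in>Q0. c < f x}"
  proof
    fix x assume x: "x \<in> G"
    have "Inf ((\<lambda>x. \<bar>f x\<bar>) ` G) \<le> \<bar>f x\<bar>" using x by (intro cInf_lower) (auto intro: bdd_belowI[where m=0])
    then show "x \<in> {x\<in>Q0. c < f x}" using v x G(2) fnn[of x] by auto
  qed
  then have "measure M G \<le> measure M {x\<in>Q0. c < f x}"
    using Lc_sets fin_sub[of "{x\<in>Q0. c < f x}"]
    by (intro measure_mono_fmeasurable) (auto simp: fmeasurable_def G)
  then show ?thesis using G by simp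
qed

lemma K2: assumes "0 < \<tau>" "\<tau> \<le> measure M {x\<in>Q0. c \<le> f x}"
  shows "c \<le> rearr M Q0 f \<tau>"
proof -
  have bd: "bounded {x\<in>Q0. c \<le> f x}" by (rule bounded_subset[OF bQ0]) auto
  obtain G where G: "G \<in> sets M" "G \<subseteq> {x\<in>Q0. c \<le> f x}" "measure M G = \<tau>"
  proof -
    have fc: "emeasure M {x\<in>Q0. c \<le> f x} < \<infinity>" by (rule fin_sub) (auto simp: Lc_sets')
    have "\<exists>G\<in>sets M. G \<subseteq> {x\<in>Q0. c \<le> f x} \<and> measure M G = \<tau>"
      using exists_subset_measure[OF adm Lc_sets'[of c] bd fc] assms by auto
    then show ?thesis using that by blast
  qed
  have "G \<noteq> {}" using G assms(1) by auto
  have "c \<le> Inf ((\<lambda>x. \<bar>f x\<bar>) ` G)"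
    using G(2) `G \<noteq> {}` by (intro cInf_greatest) auto
  moreover have "Inf ((\<lambda>x. \<bar>f x\<bar>) ` G) \<in> Sset \<tau>" unfolding Sset_def using G by auto
  ultimately show ?thesis unfolding rearr_eq
    using cSup_upper[OF _ Sset_bdd[OF assms(1)]] order_trans by blast
qed

lemma level: assumes "0 < t" "t \<le> measure M Q0"
  shows "measure M {x\<in>Q0. rearr M Q0 f t < f x} \<le> t"
proof -
  define s where "s = rearr M Q0 f t"
  define A where "A n = {x\<in>Q0. s + 1 / Suc n \<le> f x}" for n
  have lt: "measure M (A n) < t" for n
  proof (rule ccontr)
    assume "\<not> measure M (A n) < t"
    then have "t \<le> measure M (A n)" by simp
    then have "s + 1 / Suc n \<le> s" unfolding A_def s_def by (rule K2[OF assms(1)])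
    then show False by simp
  qed
  have "(\<lambda>n. measure M (A n)) \<longlonglongrightarrow> measure M (\<Union>n. A n)"
  proof (rule Lim_measure_incseq)
    show "range A \<subseteq> sets M" using Lc_sets' by (auto simp: A_def)
    show "incseq A" unfolding incseq_def
    proof (intro allI impI subsetI)
      fix m n x assume mn: "m \<le> n" and x: "x \<in> A m"
      have "1 / real (Suc n) \<le> 1 / real (Suc m)" by (rule inv_suc_mono[OF mn])
      then show "x \<in> A n" using x by (auto simp: A_def)
    qed
    have "(\<Union>n. A n) \<subseteq> Q0" by (auto simp: A_def)
    moreover have "(\<Union>n. A n) \<in> sets M" using Lc_sets' by (auto simp: A_def)
    ultimately show "emeasure M (\<Union>n. A n) \<noteq> \<infinity>"
      using fin_sub[of "\<Union>n. A n"] by auto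
  qed
  moreover have "(\<Union>n. A n) = {x\<in>Q0. s < f x}"
  proof
    have "s < s + 1 / real (Suc n)" for n by simp
    then show "(\<Union>n. A n) \<subseteq> {x\<in>Q0. s < f x}" unfolding A_def
      using less_le_trans by blast
    show "{x\<in>Q0. s < f x} \<subseteq> (\<Union>n. A n)"
    proof
      fix x assume x: "x \<in> {x\<in>Q0. s < f x}"
      then obtain n where "1 / Suc n < f x - s"
        by (metis diff_gt_0_iff_gt nat_approx_posE of_nat_Suc mem_Collect_eq)
      then have "x \<in> A n" using x by (auto simp: A_def)
      then show "x \<in> (\<Union>n. A n)" by blast
    qed
  qed
  ultimately show ?thesis using lt unfolding s_def
    by (metis (no_types, lifting) LIMSEQ_le_const2 less_imp_le)
qed

end

context GRset begin

lemma integral_compare: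
  assumes t0: "0 < t" and tQ: "t \<le> measure M Q0"
    and int: "integrable lborel (\<lambda>\<tau>. indicator {0<..<t} \<tau> * rearr M Q0 f \<tau>)"
  shows "(LINT \<tau>|lborel. indicator {0<..<t} \<tau> * rearr M Q0 f \<tau>) \<le>
     (LINT x|M. indicator {x\<in>Q0. rearr M Q0 f t < f x} x * (indicator Q0 x * f x))
     + (t - measure M {x\<in>Q0. rearr M Q0 f t < f x}) * rearr M Q0 f t"
proof -
  define r where "r = rearr M Q0 f"
  define s where "s = r t"
  define E where "E = {x\<in>Q0. s < f x}"
  define a where "a = measure M E"
  define h where "h \<tau> = indicator {0<..<t} \<tau> * r \<tau>" for \<tau>
  define h1 where "h1 \<tau> = indicator {..a} \<tau> * h \<tau>" for \<tau>
  define h2 where "h2 \<tau> = indicator {a<..} \<tau> * h \<tau>" for \<tau>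
  define g where "g x = indicator E x * (indicator Q0 x * f x)" for x
  have Es: "E \<in> sets M" unfolding E_def by (rule Lc_sets)
  have EQ: "E \<subseteq> Q0" unfolding E_def by auto
  have a_le: "a \<le> t" unfolding a_def E_def s_def r_def by (rule level[OF t0 tQ])
  have a0: "0 \<le> a" unfolding a_def by simp
  have s0: "0 \<le> s" unfolding s_def r_def by (rule rearr_nonneg[OF t0 tQ])
  have "h = (\<lambda>\<tau>. indicator {0<..<t} \<tau> * rearr M Q0 f \<tau>)" by (simp add: h_def r_def fun_eq_iff)
  then have hint: "integrable lborel h" using int by simp
  have h1int: "integrable lborel h1" unfolding h1_def using hint
    by (intro integrable_mult_indicator[of _ _ h, simplified]) auto
  have h2int: "integrable lborel h2" unfolding h2_def using hint
    by (intro integrable_mult_indicator[of _ _ h, simplified]) auto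
  have hsplit: "h \<tau> = h1 \<tau> + h2 \<tau>" for \<tau> by (auto simp: h1_def h2_def indicator_def)
  have rnn: "0 \<le> r \<tau>" if "0 < \<tau>" "\<tau> < t" for \<tau>
    unfolding r_def using that tQ by (intro rearr_nonneg) auto
  have h1nn: "0 \<le> h1 \<tau>" for \<tau> using rnn by (auto simp: h1_def h_def indicator_def)
  have h2le: "h2 \<tau> \<le> indicator {a<..<t} \<tau> * s" for \<tau>
  proof (cases "a < \<tau> \<and> \<tau> < t")
    case True
    have "r \<tau> \<le> s"
    proof (rule ccontr)
      assume "\<not> r \<tau> \<le> s"
      then have "\<tau> \<le> measure M {x\<in>Q0. s < f x}" unfolding r_def
        using True a0 tQ by (intro K1) auto
      then show False using True unfolding a_def E_def by simp
    qed
    then show ?thesis using True a0 by (auto simp: h2_def h_def indicator_def)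
  next
    case False then show ?thesis by (auto simp: h2_def h_def indicator_def)
  qed
  have "(LINT \<tau>|lborel. h2 \<tau>) \<le> (LINT \<tau>|lborel. indicator {a<..<t} \<tau> * s)"
  proof (rule integral_mono[OF h2int _ h2le])
    have "integrable lborel (indicator {a<..<t} :: real \<Rightarrow> real)"
    proof (rule integrable_real_indicator)
      have "emeasure lborel {a<..<t} = ennreal (t - a)" using a_le by (rule emeasure_lborel_Ioo)
      then show "emeasure lborel {a<..<t} < \<infinity>" by simp
    qed simp
    then show "integrable lborel (\<lambda>\<tau>. indicator {a<..<t} \<tau> * s)" by simp
  qed
  also have "\<dots> = (t - a) * s" using a_le by simp
  finally have I2: "(LINT \<tau>|lborel. h2 \<tau>) \<le> (t - a) * s" .
  let ?N = "restrict_space M Q0"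
  have sfN: "sigma_finite_measure ?N"
  proof -
    have "finite_measure ?N"
      using finQ0 Q0s by (intro finite_measureI) (auto simp: space_restrict_space emeasure_restrict_space spM)
    then show ?thesis by (simp add: finite_measure_def)
  qed
  have gM[measurable]: "g \<in> borel_measurable M" unfolding g_def using Es by measurable
  have gN: "g \<in> borel_measurable ?N" by (rule measurable_restrict_space1) (rule gM)
  have gnn: "0 \<le> g x" for x using fnn by (auto simp: g_def indicator_def)
  have gint: "integrable M g" unfolding g_def using GRset.gint[OF GRset_axioms] Es
    by (intro integrable_mult_indicator[of _ _ "\<lambda>x. indicator Q0 x * f x", simplified]) auto
  have h1M[measurable]: "h1 \<in> borel_measurable lborel" using h1int by auto
  have L1: "(\<integral>\<^sup>+\<tau>. ennreal (h1 \<tau>) \<partial>lborel) =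
     (\<integral>\<^sup>+c. indicator {0<..} c * emeasure lborel {\<tau>\<in>space lborel. c < h1 \<tau>} \<partial>lborel)"
    by (rule layer_cake) (auto simp: h1nn lborel.sigma_finite_measure_axioms)
  have L2: "(\<integral>\<^sup>+x. ennreal (g x) \<partial>?N) =
     (\<integral>\<^sup>+c. indicator {0<..} c * emeasure ?N {x\<in>space ?N. c < g x} \<partial>lborel)"
    by (rule layer_cake[OF sfN gN]) (simp add: gnn)
  have cmp: "indicator {0<..} c * emeasure lborel {\<tau>\<in>space lborel. c < h1 \<tau>}
      \<le> indicator {0<..} c * emeasure ?N {x\<in>space ?N. c < g x}" for c
  proof (cases "0 < c")
    case False then show ?thesis by simp
  next
    case True
    define Lc where "Lc = {x\<in>Q0. c < f x}"
    have Lcs: "Lc \<in> sets M" unfolding Lc_def by (rule Lc_sets)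
    have eq1: "{x\<in>space ?N. c < g x} = E \<inter> Lc"
      using True EQ by (auto simp: g_def Lc_def space_restrict_space spM indicator_def)
    have eq2: "emeasure ?N (E \<inter> Lc) = emeasure M (E \<inter> Lc)"
      using EQ Q0s by (intro emeasure_restrict_space) (auto simp: spM)
    have sub: "{\<tau>\<in>space lborel. c < h1 \<tau>} \<subseteq> {0<..measure M (E \<inter> Lc)}"
    proof
      fix \<tau> assume "\<tau> \<in> {\<tau>\<in>space lborel. c < h1 \<tau>}"
      then have tt: "0 < \<tau>" "\<tau> < t" "\<tau> \<le> a" and cr: "c < r \<tau>"
        using True by (auto simp: h1_def h_def split: split_indicator_asm)
      have "\<tau> \<le> measure M Lc" unfolding Lc_def r_def
        using tt cr tQ by (intro K1) (auto simp: r_def)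
      moreover have "measure M (E \<inter> Lc) = a \<or> measure M (E \<inter> Lc) = measure M Lc"
      proof (cases "c < s")
        case True
        then have "E \<inter> Lc = E" by (auto simp: E_def Lc_def)
        then show ?thesis by (simp add: a_def)
      next
        case False
        then have "E \<inter> Lc = Lc" by (auto simp: E_def Lc_def)
        then show ?thesis by simp
      qed
      ultimately show "\<tau> \<in> {0<..measure M (E \<inter> Lc)}" using tt by auto
    qed
    have "emeasure lborel {\<tau>\<in>space lborel. c < h1 \<tau>} \<le> emeasure lborel {0<..measure M (E \<inter> Lc)}"
      by (rule emeasure_mono[OF sub]) simp
    also have "\<dots> = ennreal (measure M (E \<inter> Lc))" by simp
    also have "\<dots> = emeasure M (E \<inter> Lc)"
    proof -
      have "E \<inter> Lc \<subseteq> Q0" "E \<inter> Lc \<in> sets M" using EQ Es Lcs by auto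
      then have "emeasure M (E \<inter> Lc) \<noteq> \<infinity>" using fin_sub[of "E \<inter> Lc"] by auto
      then show ?thesis by (simp add: emeasure_eq_ennreal_measure)
    qed
    finally show ?thesis using eq1 eq2 by (simp add: mult_left_mono)
  qed
  have "ennreal (LINT \<tau>|lborel. h1 \<tau>) = (\<integral>\<^sup>+\<tau>. ennreal (h1 \<tau>) \<partial>lborel)"
    using h1int h1nn by (intro nn_integral_eq_integral[symmetric]) auto
  also have "\<dots> \<le> (\<integral>\<^sup>+x. ennreal (g x) \<partial>?N)"
    unfolding L1 L2 by (intro nn_integral_mono cmp)
  also have "\<dots> = (\<integral>\<^sup>+x. ennreal (g x) * indicator Q0 x \<partial>M)"
    using Q0s by (intro nn_integral_restrict_space) (auto simp: spM)
  also have "\<dots> = (\<integral>\<^sup>+x. ennreal (g x) \<partial>M)"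
    using EQ by (intro nn_integral_cong) (auto simp: g_def indicator_def)
  also have "\<dots> = ennreal (LINT x|M. g x)"
    using gint gnn by (intro nn_integral_eq_integral) auto
  finally have I1: "(LINT \<tau>|lborel. h1 \<tau>) \<le> (LINT x|M. g x)"
    using gnn by (simp add: ennreal_le_iff integral_nonneg)
  have "(LINT \<tau>|lborel. h \<tau>) = (LINT \<tau>|lborel. h1 \<tau>) + (LINT \<tau>|lborel. h2 \<tau>)"
    unfolding hsplit using Bochner_Integration.integral_add[OF h1int h2int] by simp
  also have "\<dots> \<le> (LINT x|M. g x) + (t - a) * s" using I1 I2 by simp
  finally show ?thesis unfolding h_def g_def E_def a_def s_def r_def .
qed

end

lemma One_nth[simp]: "(One :: real ^ 'n) $ i = 1"
proof -
  have "axis i (1::real) \<in> (Basis :: (real^'n) set)" by simp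
  then have "(One :: real ^ 'n) \<bullet> axis i 1 = 1" by (rule inner_sum_Basis)
  then show ?thesis by (simp only: cart_eq_inner_axis)
qed
lemma One_nth'[simp]: "(\<Sum>x\<in>(Basis :: (real^'n) set). x $ i) = 1"
  using One_nth[of i] by (simp only: sum_component)
lemma mem_ccube: "y \<in> centered_cube x r \<longleftrightarrow> (\<forall>i. \<bar>y$i - x$i\<bar> \<le> r)"
  by (auto simp: centered_cube_def mem_box_cart abs_le_iff algebra_simps)
lemma mem_ocube: "y \<in> box (x - r *\<^sub>R One) (x + r *\<^sub>R One) \<longleftrightarrow> (\<forall>i. \<bar>y$i - x$i\<bar> < r)"
  by (auto simp: mem_box_cart abs_less_iff algebra_simps)

lemma ccube_mono: "r \<le> r' \<Longrightarrow> centered_cube x r \<subseteq> centered_cube x r'"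
  by (auto simp: mem_ccube) (meson order_trans)

lemma ccube_ball:
  fixes x :: "real ^ 'n"
  assumes "real CARD('n) * r < e"
  shows "centered_cube x r \<subseteq> ball x e"
proof
  fix y assume y: "y \<in> centered_cube x r"
  have "norm (y - x) \<le> (\<Sum>i\<in>UNIV. \<bar>(y - x)$i\<bar>)" by (rule norm_le_l1_cart)
  also have "\<dots> \<le> (\<Sum>i\<in>(UNIV::'n set). r)"
    using y by (intro sum_mono) (auto simp: mem_ccube)
  also have "\<dots> = real CARD('n) * r" by simp
  finally show "y \<in> ball x e" using assms by (simp add: dist_norm norm_minus_commute)
qed

lemma ccube_sets: "centered_cube x r \<in> sets borel"
  unfolding centered_cube_def by simp

context GRset begin

definition "Z = {x. \<exists>r>0. centered_cube x r \<subseteq> Q0 \<and> emeasure M (centered_cube x r) = 0}"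

lemma Z_null: "\<exists>N\<in>null_sets M. Z \<subseteq> N"
proof -
  define F where "F = {box (x - r *\<^sub>R One) (x + r *\<^sub>R One) | x r. r > 0 \<and> emeasure M (centered_cube x r) = 0}"
  have Fo: "\<And>S. S \<in> F \<Longrightarrow> open S" unfolding F_def by auto
  obtain F' where F': "F' \<subseteq> F" "countable F'" "\<Union>F' = \<Union>F" using Lindelof[OF Fo] by metis
  have Fn: "S \<in> null_sets M" if SF: "S \<in> F" for S
  proof -
    obtain x r where S: "S = box (x - r *\<^sub>R One) (x + r *\<^sub>R One)" "emeasure M (centered_cube x r) = 0"
      using SF unfolding F_def by blast
    have "S \<subseteq> centered_cube x r" unfolding S centered_cube_def by (rule box_subset_cbox)
    moreover have "centered_cube x r \<in> null_sets M" using S(2) ccube_sets[of x r] sM by auto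
    moreover have "S \<in> sets M" using sM S(1) by simp
    ultimately show ?thesis by (metis null_sets_subset)
  qed
  have "\<Union>F' \<in> null_sets M"
    using null_sets_UN'[OF F'(2), of id] Fn F'(1) by auto
  moreover have "Z \<subseteq> \<Union>F"
  proof
    fix x assume "x \<in> Z"
    then obtain r where r: "r > 0" "emeasure M (centered_cube x r) = 0" unfolding Z_def by auto
    then have "box (x - r *\<^sub>R One) (x + r *\<^sub>R One) \<in> F" unfolding F_def by auto
    moreover have "x \<in> box (x - r *\<^sub>R One) (x + r *\<^sub>R One)" using r by (simp add: mem_ocube)
    ultimately show "x \<in> \<Union>F" by blast
  qed
  ultimately show ?thesis using F'(3) by auto
qed

lemma density_open:
  assumes U: "open U" "U \<subseteq> W" "W \<subseteq> Q0" and x: "x \<in> U" "x \<notin> Z"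
  shows "density_point M W x"
proof -
  obtain e where e: "e > 0" "ball x e \<subseteq> U" using U x by (meson open_contains_ball)
  define r0 where "r0 = e / (2 * real CARD('n))"
  have r0: "r0 > 0" using e by (simp add: r0_def)
  have sub: "centered_cube x r \<subseteq> U" if "0 < r" "r < r0" for r
  proof -
    have "real CARD('n) * r < e"
    proof -
      have "real CARD('n) * r < real CARD('n) * r0" using that by simp
      also have "\<dots> = e / 2" by (simp add: r0_def)
      finally show ?thesis using e by simp
    qed
    then show ?thesis using ccube_ball[of r e x] e by auto
  qed
  have ev: "\<forall>\<^sub>F r in at_right 0. measure M (W \<inter> centered_cube x r) / measure M (centered_cube x r) = 1"
    unfolding eventually_at_right_field
  proof (intro exI[of _ r0] conjI allI impI)
    show "0 < r0" by fact
    fix r :: real assume r: "0 < r" "r < r0"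
    have cs: "centered_cube x r \<subseteq> U" using sub[OF r] .
    have cm: "centered_cube x r \<in> sets M" using ccube_sets sM by simp
    have csQ: "centered_cube x r \<subseteq> Q0" using cs U(2,3) by auto
    have "emeasure M (centered_cube x r) \<noteq> 0" using x(2) r csQ unfolding Z_def by auto
    moreover have "emeasure M (centered_cube x r) < \<infinity>" using fin_sub[OF csQ cm] by auto
    ultimately have "measure M (centered_cube x r) \<noteq> 0"
      by (simp add: measure_def enn2real_eq_0_iff)
    moreover have "W \<inter> centered_cube x r = centered_cube x r" using cs U(2) by auto
    ultimately show "measure M (W \<inter> centered_cube x r) / measure M (centered_cube x r) = 1" by simp
  qed
  show ?thesis unfolding density_point_def
    by (rule tendsto_eventually) (rule ev)
qed

end

lemma cube_arith:
  fixes a s m A r e l :: real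
  assumes a0: "0 \<le> a" and s0: "0 \<le> s" and m0: "0 < m" and r0: "0 < r" and r1: "r < 1"
    and e0: "0 < e" and el: "e < l" and lr: "l \<le> 2 * (1 - r)"
    and hA: "A \<le> e * a * m / 2" and hD: "(a - s) * (1 - r) \<le> e * a / 2"
  shows "A + (a - s) * r * m \<le> e * (l / (2 * r) + 1) / (l - e) * s * (r * m)"
proof -
  define x where "x = 1 - r"
  define d where "d = l - e"
  have d0: "0 < d" using el by (simp add: d_def)
  have x0: "l \<le> 2 * x" using lr by (simp add: x_def)
  have h1: "a * (2 * x - e) \<le> 2 * x * s" using hD by (simp add: x_def algebra_simps)
  have "a * d * (2 * x) = l * (a * (2 * x - e)) + a * e * (l - 2 * x)"
    by (simp add: d_def algebra_simps)
  also have "\<dots> \<le> l * (2 * x * s) + 0"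
  proof (rule add_mono)
    show "l * (a * (2 * x - e)) \<le> l * (2 * x * s)" using h1 el e0 by (intro mult_left_mono) auto
    show "a * e * (l - 2 * x) \<le> 0" using a0 e0 x0 by (intro mult_nonneg_nonpos) auto
  qed
  finally have "(a * d) * (2 * x) \<le> (l * s) * (2 * x)" by (simp add: algebra_simps)
  moreover have "0 < 2 * x" using el e0 x0 by linarith
  ultimately have ad: "a * d \<le> l * s" by (simp add: mult_le_cancel_right)
  have "(A + (a - s) * r * m) * d = A * d + r * m * (a * d - s * d)" by (simp add: algebra_simps)
  also have "\<dots> \<le> e * m * (a * d) / 2 + r * m * (l * s - s * d)"
  proof (rule add_mono)
    have "A * d \<le> (e * a * m / 2) * d" using hA d0 by (intro mult_right_mono) auto
    then show "A * d \<le> e * m * (a * d) / 2" by (simp add: algebra_simps)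
    show "r * m * (a * d - s * d) \<le> r * m * (l * s - s * d)"
      using ad r0 m0 by (intro mult_left_mono) auto
  qed
  also have "\<dots> \<le> e * m * (l * s) / 2 + r * m * (l * s - s * d)"
    using ad e0 m0 by (simp add: divide_right_mono mult_left_mono)
  also have "\<dots> = (e * (l / (2 * r) + 1) / (l - e) * s * (r * m)) * d"
    using r0 d0 by (simp add: d_def field_simps)
  finally have "(A + (a - s) * r * m) * d \<le> (e * (l / (2 * r) + 1) / (l - e) * s * (r * m)) * d" .
  then show ?thesis using d0 by (rule mult_right_le_imp_le)
qed

lemma is_cube_sets: "is_cube Q \<Longrightarrow> Q \<in> sets borel"
  by (auto simp: is_cube_def)

context GRset begin

lemma intA: assumes "B \<in> sets M" "B \<subseteq> Q0" shows "integrable M (\<lambda>x. indicator B x * f x)"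
proof -
  have "integrable M (\<lambda>x. indicator B x * (indicator Q0 x * f x))"
    using gint assms by (intro integrable_mult_indicator[of _ _ "\<lambda>x. indicator Q0 x * f x", simplified]) auto
  moreover have "(\<lambda>x. indicator B x * (indicator Q0 x * f x)) = (\<lambda>x. indicator B x * f x)"
    using assms(2) by (auto simp: indicator_def fun_eq_iff)
  ultimately show ?thesis by simp
qed

lemma intC: assumes "B \<in> sets M" "B \<subseteq> Q0" shows "integrable M (\<lambda>x. indicator B x * (c::real))"
  using fin_sub[OF assms(2,1)] assms(1) by (intro integrable_mult_left) auto

lemma intD: assumes "B \<in> sets M" "B \<subseteq> Q0"
  shows "integrable M (\<lambda>x. indicator B x * (f x - c))"
    and "(LINT x|M. indicator B x * (f x - c)) = (LINT x|M. indicator B x * f x) - c * measure M B"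
proof -
  have eq: "(\<lambda>x. indicator B x * (f x - c)) = (\<lambda>x. indicator B x * f x - indicator B x * c)"
    by (auto simp: fun_eq_iff algebra_simps)
  show "integrable M (\<lambda>x. indicator B x * (f x - c))" unfolding eq using intA[OF assms] intC[OF assms] by auto
  show "(LINT x|M. indicator B x * (f x - c)) = (LINT x|M. indicator B x * f x) - c * measure M B"
    unfolding eq using intA[OF assms] intC[OF assms, of c] assms(1) by (simp add: spM)
qed

lemma intAbs: assumes "B \<in> sets M" "B \<subseteq> Q0"
  shows "integrable M (\<lambda>x. indicator B x * \<bar>f x - c\<bar>)"
    and "\<bar>(LINT x|M. indicator B x * f x) - c * measure M B\<bar> \<le> (LINT x|M. indicator B x * \<bar>f x - c\<bar>)"
proof -
  have eq: "(\<lambda>x. indicator B x * \<bar>f x - c\<bar>) = (\<lambda>x. \<bar>indicator B x * (f x - c)\<bar>)"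
    by (auto simp: fun_eq_iff indicator_def)
  show "integrable M (\<lambda>x. indicator B x * \<bar>f x - c\<bar>)" unfolding eq using intD(1)[OF assms] by auto
  have "\<bar>LINT x|M. indicator B x * (f x - c)\<bar> \<le> (LINT x|M. \<bar>indicator B x * (f x - c)\<bar>)"
    using integral_norm_bound[of M "\<lambda>x. indicator B x * (f x - c)"] by simp
  then show "\<bar>(LINT x|M. indicator B x * f x) - c * measure M B\<bar> \<le> (LINT x|M. indicator B x * \<bar>f x - c\<bar>)"
    unfolding eq intD(2)[OF assms] .
qed

lemma null_int: assumes "B \<in> sets M" "emeasure M B = 0"
  shows "(LINT x|M. indicator B x * (h x::real)) = 0"
proof -
  have "AE x in M. x \<notin> B" using assms by (intro AE_I'[of B]) auto
  then have "AE x in M. indicator B x * h x = 0" by eventually_elim auto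
  then show ?thesis by (rule integral_eq_zero_AE)
qed

lemma cube_est:
  assumes Qc: "is_cube Q" "Q \<subseteq> Q0" and Us: "U \<in> sets M" "U \<subseteq> Q0"
    and rho: "0 < r" "r < 1" and mQU: "measure M (Q \<inter> U) = r * measure M Q"
    and fs: "\<And>x. x \<in> Q0 \<Longrightarrow> x \<notin> U \<Longrightarrow> f x \<le> s" and s0: "0 \<le> s"
    and GRQ: "0 < measure M Q \<Longrightarrow> osc M Q f \<le> e * avg M Q f"
    and e: "0 < e" "e < l" "l \<le> 2 * (1 - r)"
  shows "(LINT x|M. indicator (Q \<inter> U) x * (f x - s)) \<le> e * (l / (2 * r) + 1) / (l - e) * s * measure M (Q \<inter> U)"
proof -
  have Qs: "Q \<in> sets M" using is_cube_sets[OF Qc(1)] sM by simp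
  have QUs: "Q \<inter> U \<in> sets M" "Q \<inter> U \<subseteq> Q0" using Qs Us Qc by auto
  have QDs: "Q - U \<in> sets M" "Q - U \<subseteq> Q0" using Qs Us Qc by auto
  define m where "m = measure M Q"
  show ?thesis
  proof (cases "m = 0")
    case True
    then have "measure M (Q \<inter> U) = 0" using mQU by (simp add: m_def)
    moreover have "emeasure M (Q \<inter> U) < \<infinity>" using fin_sub QUs by auto
    ultimately have "emeasure M (Q \<inter> U) = 0"
      by (simp add: emeasure_eq_ennreal_measure less_top)
    then have "(LINT x|M. indicator (Q \<inter> U) x * (f x - s)) = 0" using QUs by (intro null_int) auto
    then show ?thesis using \<open>measure M (Q \<inter> U) = 0\<close> by simp
  next
    case False
    have "0 \<le> m" by (simp add: m_def)
    with False have m0: "0 < m" by simp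
    define J where "J B = (LINT x|M. indicator B x * f x)" for B
    define a where "a = avg M Q f"
    have a_eq: "J Q = a * m" using m0 by (simp add: a_def avg_def J_def m_def set_lebesgue_integral_def)
    have osc_eq: "osc M Q f * m = (LINT x|M. indicator Q x * \<bar>f x - a\<bar>)"
      using m0 by (simp add: a_def osc_def m_def set_lebesgue_integral_def)
    have a0: "0 \<le> a"
    proof -
      have "0 \<le> J Q" unfolding J_def using fnn Qc(2) by (intro Bochner_Integration.integral_nonneg) (auto simp: indicator_def)
      then show ?thesis using a_eq m0 by (simp add: zero_le_mult_iff)
    qed
    have splitJ: "J Q = J (Q \<inter> U) + J (Q - U)"
    proof -
      have "(\<lambda>x. indicator Q x * f x) = (\<lambda>x. indicator (Q \<inter> U) x * f x + indicator (Q - U) x * f x)"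
        by (auto simp: fun_eq_iff indicator_def)
      then show ?thesis unfolding J_def using intA[OF QUs] intA[OF QDs] by simp
    qed
    have splitm: "m = measure M (Q \<inter> U) + measure M (Q - U)"
    proof -
      have "Q = (Q \<inter> U) \<union> (Q - U)" by auto
      then have "measure M Q = measure M ((Q \<inter> U) \<union> (Q - U))" by simp
      also have "\<dots> = measure M (Q \<inter> U) + measure M (Q - U)"
        using QUs QDs fin_sub by (intro measure_Union) (auto simp: less_top)
      finally show ?thesis by (simp add: m_def)
    qed
    have splitAbs: "(LINT x|M. indicator Q x * \<bar>f x - a\<bar>) =
       (LINT x|M. indicator (Q \<inter> U) x * \<bar>f x - a\<bar>) + (LINT x|M. indicator (Q - U) x * \<bar>f x - a\<bar>)"
    proof -
      have "(\<lambda>x. indicator Q x * \<bar>f x - a\<bar>) = (\<lambda>x. indicator (Q \<inter> U) x * \<bar>f x - a\<bar> + indicator (Q - U) x * \<bar>f x - a\<bar>)"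
        by (auto simp: fun_eq_iff indicator_def)
      then show ?thesis using intAbs(1)[OF QUs, of a] intAbs(1)[OF QDs, of a] by simp
    qed
    define A where "A = J (Q \<inter> U) - a * measure M (Q \<inter> U)"
    define D where "D = J (Q - U) - a * measure M (Q - U)"
    have AD: "A + D = 0" unfolding A_def D_def using splitJ splitm a_eq by (simp add: algebra_simps)
    have "\<bar>A\<bar> + \<bar>D\<bar> \<le> osc M Q f * m"
      unfolding osc_eq splitAbs A_def D_def J_def
      by (intro add_mono intAbs(2)[OF QUs] intAbs(2)[OF QDs])
    also have "\<dots> \<le> e * a * m" using GRQ m0 by (simp add: m_def a_def mult_right_mono)
    finally have hA: "A \<le> e * a * m / 2" using AD by linarith
    have "J (Q - U) \<le> (LINT x|M. indicator (Q - U) x * s)"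
      unfolding J_def using intA[OF QDs] intC[OF QDs] fs QDs(2)
      by (intro integral_mono) (auto simp: indicator_def)
    also have "\<dots> = s * measure M (Q - U)" using QDs by (simp add: spM)
    finally have "D \<le> (s - a) * measure M (Q - U)" unfolding D_def by (simp add: algebra_simps)
    moreover have "measure M (Q - U) = (1 - r) * m" using splitm mQU by (simp add: m_def algebra_simps)
    ultimately have "(a - s) * (1 - r) * m \<le> e * a * m / 2" using AD hA by (simp add: algebra_simps)
    then have hD: "(a - s) * (1 - r) \<le> e * a / 2" using m0
      by (metis (no_types, opaque_lifting) mult.commute mult_le_cancel_left_pos times_divide_eq_right)
    have "(LINT x|M. indicator (Q \<inter> U) x * (f x - s)) = A + (a - s) * r * m"
      unfolding intD(2)[OF QUs] A_def J_def using mQU by (simp add: m_def algebra_simps)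
    also have "\<dots> \<le> e * (l / (2 * r) + 1) / (l - e) * s * (r * m)"
      by (rule cube_arith[OF a0 s0 m0 rho e hA hD])
    finally show ?thesis using mQU by (simp add: m_def)
  qed
qed

end

lemma overlap_swap:
  fixes \<psi> :: "'a \<Rightarrow> ennreal" and Qs :: "nat \<Rightarrow> 'a set"
  assumes Qm: "\<And>i. i \<in> I \<Longrightarrow> Qs i \<in> sets M" and pm: "\<psi> \<in> borel_measurable M"
  shows "(\<Sum>i. indicator I i * (\<integral>\<^sup>+x. \<psi> x * indicator (Qs i) x \<partial>M)) =
         (\<integral>\<^sup>+x. (\<Sum>i. indicator I i * (\<psi> x * indicator (Qs i) x)) \<partial>M)"
proof -
  define g where "g i x = indicator I i * (\<psi> x * indicator (Qs i) x)" for i x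
  have gm: "g i \<in> borel_measurable M" for i
  proof (cases "i \<in> I")
    case True then show ?thesis using Qm[OF True] pm unfolding g_def by measurable
  next
    case False then show ?thesis unfolding g_def by simp
  qed
  have "(\<Sum>i. indicator I i * (\<integral>\<^sup>+x. \<psi> x * indicator (Qs i) x \<partial>M)) = (\<Sum>i. \<integral>\<^sup>+x. g i x \<partial>M)"
  proof (intro suminf_cong)
    fix i show "indicator I i * (\<integral>\<^sup>+x. \<psi> x * indicator (Qs i) x \<partial>M) = (\<integral>\<^sup>+x. g i x \<partial>M)"
    proof (cases "i \<in> I")
      case True then show ?thesis by (simp add: g_def)
    next
      case False then show ?thesis by (simp add: g_def)
    qed
  qed
  also have "\<dots> = (\<integral>\<^sup>+x. (\<Sum>i. g i x) \<partial>M)" by (rule nn_integral_suminf[symmetric]) (rule gm)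
  finally show ?thesis by (simp add: g_def)
qed

lemma overlap_upper:
  fixes \<psi> :: "'a \<Rightarrow> ennreal" and Qs :: "nat \<Rightarrow> 'a set"
  assumes Qm: "\<And>i. i \<in> I \<Longrightarrow> Qs i \<in> sets M" and pm: "\<psi> \<in> borel_measurable M"
    and ov: "\<And>x. finite {i\<in>I. x \<in> Qs i} \<and> card {i\<in>I. x \<in> Qs i} \<le> B"
  shows "(\<Sum>i. indicator I i * (\<integral>\<^sup>+x. \<psi> x * indicator (Qs i) x \<partial>M)) \<le> of_nat B * (\<integral>\<^sup>+x. \<psi> x \<partial>M)"
proof -
  have pt: "(\<Sum>i. indicator I i * (\<psi> x * indicator (Qs i) x)) \<le> of_nat B * \<psi> x" for x
  proof -
    define S where "S = {i\<in>I. x \<in> Qs i}"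
    have "(\<Sum>i. indicator I i * (\<psi> x * indicator (Qs i) x)) = (\<Sum>i\<in>S. indicator I i * (\<psi> x * indicator (Qs i) x))"
      using ov[of x] by (intro suminf_finite) (auto simp: S_def indicator_def)
    also have "\<dots> = (\<Sum>i\<in>S. \<psi> x)" by (intro sum.cong) (auto simp: S_def)
    also have "\<dots> = of_nat (card S) * \<psi> x" by simp
    also have "\<dots> \<le> of_nat B * \<psi> x" using ov[of x] by (intro mult_right_mono) (auto simp: S_def)
    finally show ?thesis .
  qed
  have "(\<Sum>i. indicator I i * (\<integral>\<^sup>+x. \<psi> x * indicator (Qs i) x \<partial>M)) =
         (\<integral>\<^sup>+x. (\<Sum>i. indicator I i * (\<psi> x * indicator (Qs i) x)) \<partial>M)" by (rule overlap_swap[OF Qm pm])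
  also have "\<dots> \<le> (\<integral>\<^sup>+x. of_nat B * \<psi> x \<partial>M)" by (intro nn_integral_mono pt)
  also have "\<dots> = of_nat B * (\<integral>\<^sup>+x. \<psi> x \<partial>M)" using pm by (rule nn_integral_cmult)
  finally show ?thesis .
qed

lemma overlap_lower:
  fixes \<psi> :: "'a \<Rightarrow> ennreal" and Qs :: "nat \<Rightarrow> 'a set"
  assumes Qm: "\<And>i. i \<in> I \<Longrightarrow> Qs i \<in> sets M" and pm: "\<psi> \<in> borel_measurable M"
    and ae: "AE x in M. x \<in> (\<Union>i\<in>I. Qs i) \<or> \<psi> x = 0"
  shows "(\<integral>\<^sup>+x. \<psi> x \<partial>M) \<le> (\<Sum>i. indicator I i * (\<integral>\<^sup>+x. \<psi> x * indicator (Qs i) x \<partial>M))"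
proof -
  have "AE x in M. \<psi> x \<le> (\<Sum>i. indicator I i * (\<psi> x * indicator (Qs i) x))"
    using ae
  proof eventually_elim
    case (elim x)
    show ?case
    proof (cases "\<psi> x = 0")
      case True then show ?thesis by simp
    next
      case False
      with elim obtain i where i: "i \<in> I" "x \<in> Qs i" by auto
      have "\<psi> x = (\<Sum>j\<in>{i}. indicator I j * (\<psi> x * indicator (Qs j) x))" using i by simp
      also have "\<dots> \<le> (\<Sum>j. indicator I j * (\<psi> x * indicator (Qs j) x))"
        by (intro sum_le_suminf) auto
      finally show ?thesis .
    qed
  qed
  then have "(\<integral>\<^sup>+x. \<psi> x \<partial>M) \<le> (\<integral>\<^sup>+x. (\<Sum>i. indicator I i * (\<psi> x * indicator (Qs i) x)) \<partial>M)"
    by (rule nn_integral_mono_AE)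
  also have "\<dots> = (\<Sum>i. indicator I i * (\<integral>\<^sup>+x. \<psi> x * indicator (Qs i) x \<partial>M))"
    by (rule overlap_swap[OF Qm pm, symmetric])
  finally show ?thesis .
qed

lemma le_eps_lemma:
  fixes x y K d0 :: real
  assumes "0 < d0" "0 \<le> K" "\<And>d. 0 < d \<Longrightarrow> d \<le> d0 \<Longrightarrow> x \<le> y + K * d"
  shows "x \<le> y"
proof (rule ccontr)
  assume "\<not> x \<le> y"
  define d where "d = min d0 ((x - y) / (2 * (K + 1)))"
  have d0: "0 < d" "d \<le> d0" using assms(1,2) \<open>\<not> x \<le> y\<close> by (auto simp: d_def)
  have "K * d \<le> (K + 1) * d" using d0 by (simp add: algebra_simps)
  also have "\<dots> \<le> (K + 1) * ((x - y) / (2 * (K + 1)))"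
    using assms(2) by (intro mult_left_mono) (auto simp: d_def)
  also have "\<dots> = (x - y) / 2" using assms(2) by (simp add: field_simps)
  finally have "K * d \<le> (x - y) / 2" .
  then have "2 * (K * d) \<le> x - y" by (simp add: field_simps)
  moreover have "x \<le> y + K * d" using assms(3) d0 by auto
  ultimately show False using \<open>\<not> x \<le> y\<close> by linarith
qed


context GRset begin

lemma outer_approx:
  assumes Es: "E \<in> sets M" and d: "0 < \<delta>"
  shows "\<exists>U. open U \<and> E \<subseteq> U \<and> measure M (U \<inter> Q0) < measure M (E \<inter> Q0) + \<delta>"
proof -
  define D where "D = density M (indicator Q0 :: _ \<Rightarrow> ennreal)"
  have sD: "sets D = sets borel" by (simp add: D_def sM)
  have spD: "space D = UNIV" by (simp add: D_def spM)
  have eD: "emeasure D A = emeasure M (A \<inter> Q0)" if "A \<in> sets M" for A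
  proof -
    have "emeasure D A = (\<integral>\<^sup>+x. indicator Q0 x * indicator A x \<partial>M)"
      unfolding D_def using Q0s that by (intro emeasure_density) auto
    also have "\<dots> = (\<integral>\<^sup>+x. indicator (A \<inter> Q0) x \<partial>M)"
      by (intro nn_integral_cong) (auto simp: indicator_def)
    also have "\<dots> = emeasure M (A \<inter> Q0)" using that Q0s by simp
    finally show ?thesis .
  qed
  have "UNIV \<in> sets M" using sets.top[of M] spM by simp
  then have finD: "emeasure D (space D) \<noteq> \<infinity>" using eD[of UNIV] finQ0 spD by simp
  have EB: "E \<in> sets borel" using Es sM by simp
  have fE: "emeasure M (E \<inter> Q0) < \<infinity>" using fin_sub[of "E \<inter> Q0"] Es Q0s by auto
  have "(INF U\<in>{U. E \<subseteq> U \<and> open U}. emeasure D U) = emeasure D E"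
    using outer_regular[OF sD finD EB] by simp
  also have "\<dots> = emeasure M (E \<inter> Q0)" using eD Es by simp
  also have "\<dots> = ennreal (measure M (E \<inter> Q0))" using fE by (simp add: emeasure_eq_ennreal_measure)
  also have "\<dots> < ennreal (measure M (E \<inter> Q0) + \<delta>)" using d by (simp add: ennreal_lessI)
  finally obtain U where U: "E \<subseteq> U" "open U" "emeasure D U < ennreal (measure M (E \<inter> Q0) + \<delta>)"
    by (auto simp: INF_less_iff)
  have Us: "U \<in> sets M" using U(2) sM by simp
  have "ennreal (measure M (U \<inter> Q0)) = emeasure M (U \<inter> Q0)"
    using fin_sub[of "U \<inter> Q0"] Us Q0s by (simp add: emeasure_eq_ennreal_measure less_top)
  also have "\<dots> = emeasure D U" using eD[OF Us] by simp
  also have "\<dots> < ennreal (measure M (E \<inter> Q0) + \<delta>)" by (rule U(3))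
  finally have "measure M (U \<inter> Q0) < measure M (E \<inter> Q0) + \<delta>"
    by (metis ennreal_less_iff measure_nonneg)
  then show ?thesis using U by blast
qed

end

context GRset begin

lemma nn_ind2: assumes "A \<in> sets M" "A \<subseteq> Q0" "Qi \<in> sets M"
  shows "(\<integral>\<^sup>+x. indicator A x * indicator Qi x \<partial>M) = ennreal (measure M (Qi \<inter> A))"
proof -
  have "(\<integral>\<^sup>+x. indicator A x * indicator Qi x \<partial>M) = (\<integral>\<^sup>+x. indicator (Qi \<inter> A) x \<partial>M)"
    by (intro nn_integral_cong) (auto simp: indicator_def)
  also have "\<dots> = emeasure M (Qi \<inter> A)" using assms by simp
  also have "\<dots> = ennreal (measure M (Qi \<inter> A))"
  proof -
    have "Qi \<inter> A \<subseteq> Q0" "Qi \<inter> A \<in> sets M" using assms by auto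
    then have "emeasure M (Qi \<inter> A) \<noteq> \<infinity>" using fin_sub[of "Qi \<inter> A"] by auto
    then show ?thesis by (simp add: emeasure_eq_ennreal_measure)
  qed
  finally show ?thesis .
qed

lemma nn_ind1: assumes "A \<in> sets M" "A \<subseteq> Q0"
  shows "(\<integral>\<^sup>+x. indicator A x \<partial>M) = ennreal (measure M A)"
  using fin_sub[of A] assms by (simp add: emeasure_eq_ennreal_measure less_top)

lemma main_est:
  assumes cov: "covering_constant B TYPE('n)" and cube: "is_cube Q0" and pos: "0 < emeasure M Q0"
    and GRQ: "\<And>Q. is_cube Q \<Longrightarrow> Q \<subseteq> Q0 \<Longrightarrow> 0 < measure M Q \<Longrightarrow> osc M Q f \<le> eps * avg M Q f"
    and e: "0 < eps" "eps < lam" and r: "0 < rho" "rho < 1 - lam / 2"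
    and t: "0 < t" "t \<le> rho * measure M Q0"
  shows "(LINT x|M. indicator {x\<in>Q0. rearr M Q0 f t < f x} x * (f x - rearr M Q0 f t))
     \<le> real B * (eps * (lam / rho + 1) / (lam - eps)) * rearr M Q0 f t * measure M {x\<in>Q0. rearr M Q0 f t < f x}"
proof -
  define s where "s = rearr M Q0 f t"
  define E where "E = {x\<in>Q0. s < f x}"
  define mQ where "mQ = measure M Q0"
  have "emeasure M Q0 = ennreal mQ" using finQ0 by (simp add: mQ_def emeasure_eq_ennreal_measure)
  with pos have mQ0: "0 < mQ" by simp
  have tQ: "t \<le> mQ"
  proof -
    have "rho < 1" using r e by linarith
    then have "rho * mQ \<le> mQ" using mQ0 by simp
    then show ?thesis using t by (simp add: mQ_def)
  qed
  have s0: "0 \<le> s" unfolding s_def using t(1) tQ by (intro rearr_nonneg) (auto simp: mQ_def)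
  have Es: "E \<in> sets M" unfolding E_def by (rule Lc_sets)
  have EQ: "E \<subseteq> Q0" unfolding E_def by auto
  have aE: "measure M E \<le> t" unfolding E_def s_def using t(1) tQ by (intro level) (auto simp: mQ_def)
  define r' where "r' = (rho + (1 - lam / 2)) / 2"
  have r'1: "rho < r'" "r' < 1 - lam / 2" using r by (auto simp: r'_def)
  have r'2: "0 < r'" "r' < 1" "lam \<le> 2 * (1 - r')" using r'1 r e by auto
  define C' where "C' = eps * (lam / (2 * r') + 1) / (lam - eps)"
  define C where "C = eps * (lam / rho + 1) / (lam - eps)"
  have C'0: "0 \<le> C'" unfolding C'_def using e r'2 by (intro divide_nonneg_pos mult_nonneg_nonneg) auto
  have C'C: "C' \<le> C"
  proof -
    have "lam / (2 * r') \<le> lam / rho" using e r r'1 by (intro divide_left_mono) auto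
    then show ?thesis unfolding C'_def C_def using e
      by (intro divide_right_mono mult_left_mono) auto
  qed
  obtain a0 l where Q0eq: "Q0 = cbox a0 (a0 + l *\<^sub>R One)" using cube unfolding is_cube_def by auto
  define b where "b = a0 + l *\<^sub>R One"
  have Q0cb: "Q0 = cbox a0 b" using Q0eq by (simp add: b_def)
  have Bd: "cbox a0 b - box a0 b \<in> null_sets M"
    using null_sets_cbox_Diff_box[of a0 b] adm unfolding admissible_measure_def absolutely_continuous_def by auto
  obtain N where N: "N \<in> null_sets M" "Z \<subseteq> N" using Z_null by auto
  define \<phi> where "\<phi> x = indicator E x * (f x - s)" for x
  have \<phi>int: "integrable M \<phi>" unfolding \<phi>_def[abs_def] by (rule intD(1)[OF Es EQ])
  have \<phi>nn: "0 \<le> \<phi> x" for x by (auto simp: \<phi>_def E_def indicator_def)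
  have \<phi>m[measurable]: "\<phi> \<in> borel_measurable M" using \<phi>int by auto
  have claim: "(LINT x|M. \<phi> x) \<le> C' * s * B * measure M E + (C' * s * B + s * B) * \<delta>"
    if d: "0 < \<delta>" "\<delta> \<le> (r' - rho) * mQ" for \<delta>
  proof -
    obtain U0 where U0: "open U0" "E \<subseteq> U0" "measure M (U0 \<inter> Q0) < measure M (E \<inter> Q0) + \<delta>"
      using outer_approx[OF Es d(1)] by auto
    have EQ': "E \<inter> Q0 = E" using EQ by auto
    define U where "U = U0 \<inter> box a0 b"
    define W where "W = U \<union> E"
    have Uo: "open U" unfolding U_def by (intro open_Int U0(1) open_box)
    have Us: "U \<in> sets M" using Uo sM by simp
    have Ws: "W \<in> sets M" using Us Es by (simp add: W_def)
    have WQ: "W \<subseteq> Q0" using EQ box_subset_cbox[of a0 b] by (auto simp: W_def U_def Q0cb)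
    have UW: "U \<subseteq> W" by (simp add: W_def)
    have EW: "E \<subseteq> W" by (simp add: W_def)
    have WU0: "W \<subseteq> U0 \<inter> Q0" using WQ U0(2) by (auto simp: W_def U_def)
    have U0Qs: "U0 \<inter> Q0 \<in> sets M" using U0(1) sM Q0s by simp
    have "measure M W \<le> measure M (U0 \<inter> Q0)"
      using WU0 U0Qs fin_sub[of "U0 \<inter> Q0"] Ws by (intro measure_mono_fmeasurable) (auto simp: fmeasurable_def)
    then have muW: "measure M W \<le> measure M E + \<delta>" using U0(3) EQ' by simp
    have muWr: "measure M W \<le> r' * measure M Q0"
    proof -
      have "measure M W \<le> rho * mQ + (r' - rho) * mQ" using muW aE t d by (simp add: mQ_def)
      also have "\<dots> = r' * mQ" by (simp add: algebra_simps)
      finally show ?thesis by (simp add: mQ_def)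
    qed
    have muWE: "measure M (W - E) \<le> \<delta>"
    proof -
      have "measure M (W - E) = measure M W - measure M E"
        using EW Es Ws fin_sub[OF WQ Ws] by (intro measure_Diff) (auto simp: less_top)
      then show ?thesis using muW by simp
    qed
    have WEs: "W - E \<in> sets M" "W - E \<subseteq> Q0" using Ws Es WQ by auto
    have H: "admissible_measure M \<and> is_cube Q0 \<and> 0 < emeasure M Q0 \<and> emeasure M Q0 < \<infinity> \<and>
        W \<in> sets M \<and> W \<subseteq> Q0 \<and> 0 < r' \<and> r' < 1 \<and> measure M W \<le> r' * measure M Q0"
      using adm cube pos finQ0 Ws WQ r'2 muWr by auto
    note ex = cov[unfolded covering_constant_def, THEN spec[of _ M], THEN spec[of _ Q0],
        THEN spec[of _ W], THEN spec[of _ r'], THEN mp, OF H]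
    from ex obtain I :: "nat set" and Qs :: "nat \<Rightarrow> (real ^ 'n) set" where
      Qc': "\<forall>i\<in>I. is_cube (Qs i) \<and> Qs i \<subseteq> Q0 \<and> measure M (Qs i \<inter> W) = r' * measure M (Qs i)"
      and ov0': "\<forall>x\<in>Q0. finite {i\<in>I. x \<in> Qs i} \<and> card {i\<in>I. x \<in> Qs i} \<le> B"
      and dens: "{x. density_point M W x} \<subseteq> (\<Union>i\<in>I. Qs i)"
      by blast
    have Qc: "is_cube (Qs i) \<and> Qs i \<subseteq> Q0 \<and> measure M (Qs i \<inter> W) = r' * measure M (Qs i)" if "i \<in> I" for i
      using Qc' that by blast
    have ov0: "finite {i\<in>I. x \<in> Qs i} \<and> card {i\<in>I. x \<in> Qs i} \<le> B" if "x \<in> Q0" for x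
      using ov0' that by blast
    have Qsm: "Qs i \<in> sets M" if "i \<in> I" for i using Qc[OF that] is_cube_sets sM by auto
    have ov: "finite {i\<in>I. x \<in> Qs i} \<and> card {i\<in>I. x \<in> Qs i} \<le> B" for x
    proof (cases "x \<in> Q0")
      case True then show ?thesis by (rule ov0)
    next
      case False
      then have e0: "{i\<in>I. x \<in> Qs i} = {}" using Qc by auto
      show ?thesis unfolding e0 by simp
    qed
    have covE: "x \<in> (\<Union>i\<in>I. Qs i)" if "x \<in> E" "x \<notin> N" "x \<notin> cbox a0 b - box a0 b" for x
    proof -
      have "x \<in> box a0 b" using that EQ Q0cb by auto
      then have "x \<in> U" using that U0(2) by (auto simp: U_def)
      moreover have "x \<notin> Z" using that N by auto
      ultimately have "density_point M W x" by (intro density_open[OF Uo UW WQ])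
      then show ?thesis using dens by auto
    qed
    define \<psi> where "\<psi> x = ennreal (\<phi> x)" for x
    have \<psi>m: "\<psi> \<in> borel_measurable M" unfolding \<psi>_def[abs_def] by measurable
    have ae: "AE x in M. x \<in> (\<Union>i\<in>I. Qs i) \<or> \<psi> x = 0"
    proof -
      have "N \<union> (cbox a0 b - box a0 b) \<in> null_sets M" using N Bd by auto
      then have "AE x in M. x \<notin> N \<union> (cbox a0 b - box a0 b)" by (rule AE_not_in)
      then show ?thesis
      proof eventually_elim
        case (elim x)
        show ?case
        proof (cases "x \<in> E")
          case True then show ?thesis using covE elim by auto
        next
          case False then show ?thesis by (simp add: \<psi>_def \<phi>_def)
        qed
      qed
    qed
    define T1 where "T1 i = (\<integral>\<^sup>+x. indicator W x * indicator (Qs i) x \<partial>M)" for i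
    define T2 where "T2 i = (\<integral>\<^sup>+x. indicator (W - E) x * indicator (Qs i) x \<partial>M)" for i
    have per_i: "(\<integral>\<^sup>+x. \<psi> x * indicator (Qs i) x \<partial>M) \<le> ennreal (C' * s) * T1 i + ennreal s * T2 i"
      if iI: "i \<in> I" for i
    proof -
      define Qi where "Qi = Qs i"
      have Qis: "Qi \<in> sets M" "Qi \<subseteq> Q0" "is_cube Qi" using Qsm[OF iI] Qc[OF iI] by (auto simp: Qi_def)
      have mQW: "measure M (Qi \<inter> W) = r' * measure M Qi" using Qc[OF iI] by (simp add: Qi_def)
      have QEs: "Qi \<inter> E \<in> sets M" "Qi \<inter> E \<subseteq> Q0" using Qis Es by auto
      have QWs: "Qi \<inter> W \<in> sets M" "Qi \<inter> W \<subseteq> Q0" using Qis Ws WQ by auto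
      have QWEs: "Qi \<inter> (W - E) \<in> sets M" "Qi \<inter> (W - E) \<subseteq> Q0" using Qis WEs by auto
      have "(\<integral>\<^sup>+x. \<psi> x * indicator Qi x \<partial>M) = (\<integral>\<^sup>+x. ennreal (indicator (Qi \<inter> E) x * (f x - s)) \<partial>M)"
        by (intro nn_integral_cong) (auto simp: \<psi>_def \<phi>_def indicator_def)
      also have "\<dots> = ennreal (LINT x|M. indicator (Qi \<inter> E) x * (f x - s))"
        using intD(1)[OF QEs] by (intro nn_integral_eq_integral) (auto simp: E_def indicator_def)
      also have "\<dots> \<le> ennreal (C' * s * measure M (Qi \<inter> W) + s * measure M (Qi \<inter> (W - E)))"
      proof (rule ennreal_leI)
        have spl: "(LINT x|M. indicator (Qi \<inter> W) x * (f x - s)) =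
           (LINT x|M. indicator (Qi \<inter> E) x * (f x - s)) + (LINT x|M. indicator (Qi \<inter> (W - E)) x * (f x - s))"
        proof -
          have "(\<lambda>x. indicator (Qi \<inter> W) x * (f x - s)) =
             (\<lambda>x. indicator (Qi \<inter> E) x * (f x - s) + indicator (Qi \<inter> (W - E)) x * (f x - s))"
            using EW by (auto simp: fun_eq_iff indicator_def)
          then show ?thesis using intD(1)[OF QEs] intD(1)[OF QWEs] by simp
        qed
        have "0 \<le> (LINT x|M. indicator (Qi \<inter> (W - E)) x * f x)"
          using QWEs(2) fnn by (intro Bochner_Integration.integral_nonneg) (auto simp: indicator_def)
        then have lo: "- (s * measure M (Qi \<inter> (W - E))) \<le> (LINT x|M. indicator (Qi \<inter> (W - E)) x * (f x - s))"
          unfolding intD(2)[OF QWEs] by simp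
        have ce: "(LINT x|M. indicator (Qi \<inter> W) x * (f x - s)) \<le> C' * s * measure M (Qi \<inter> W)"
        proof -
          have "(LINT x|M. indicator (Qi \<inter> W) x * (f x - s)) \<le> eps * (lam / (2 * r') + 1) / (lam - eps) * s * measure M (Qi \<inter> W)"
          proof (rule cube_est[OF Qis(3) Qis(2) Ws WQ r'2(1) r'2(2) mQW _ s0 _ e(1) e(2) r'2(3)])
            show "f x \<le> s" if "x \<in> Q0" "x \<notin> W" for x using that EW by (auto simp: E_def)
            show "osc M Qi f \<le> eps * avg M Qi f" if "0 < measure M Qi" using GRQ[OF Qis(3) Qis(2) that] .
          qed
          then show ?thesis by (simp add: C'_def)
        qed
        show "(LINT x|M. indicator (Qi \<inter> E) x * (f x - s)) \<le> C' * s * measure M (Qi \<inter> W) + s * measure M (Qi \<inter> (W - E))"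
          using spl lo ce by linarith
      qed
      also have "\<dots> = ennreal (C' * s) * T1 i + ennreal s * T2 i"
      proof -
        have "T1 i = ennreal (measure M (Qi \<inter> W))" unfolding T1_def Qi_def using nn_ind2[OF Ws WQ Qsm[OF iI]] by simp
        moreover have "T2 i = ennreal (measure M (Qi \<inter> (W - E)))" unfolding T2_def Qi_def using nn_ind2[OF WEs Qsm[OF iI]] by simp
        ultimately show ?thesis using C'0 s0
          by (simp add: ennreal_plus ennreal_mult mult_nonneg_nonneg)
      qed
      finally show ?thesis by (simp add: Qi_def)
    qed
    have "ennreal (LINT x|M. \<phi> x) = (\<integral>\<^sup>+x. \<psi> x \<partial>M)"
      unfolding \<psi>_def using \<phi>int \<phi>nn by (intro nn_integral_eq_integral[symmetric]) auto
    also have "\<dots> \<le> (\<Sum>i. indicator I i * (\<integral>\<^sup>+x. \<psi> x * indicator (Qs i) x \<partial>M))"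
      by (rule overlap_lower[OF Qsm \<psi>m ae])
    also have "\<dots> \<le> (\<Sum>i. indicator I i * (ennreal (C' * s) * T1 i + ennreal s * T2 i))"
    proof (intro suminf_le summableI allI)
      fix i show "indicator I i * (\<integral>\<^sup>+x. \<psi> x * indicator (Qs i) x \<partial>M) \<le> indicator I i * (ennreal (C' * s) * T1 i + ennreal s * T2 i)"
        by (cases "i \<in> I") (auto simp: per_i)
    qed
    also have "\<dots> = (\<Sum>i. ennreal (C' * s) * (indicator I i * T1 i) + ennreal s * (indicator I i * T2 i))"
      by (intro suminf_cong) (simp add: algebra_simps)
    also have "\<dots> = ennreal (C' * s) * (\<Sum>i. indicator I i * T1 i) + ennreal s * (\<Sum>i. indicator I i * T2 i)"
      by (subst suminf_add[symmetric]) auto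
    also have "\<dots> \<le> ennreal (C' * s) * (of_nat B * (\<integral>\<^sup>+x. indicator W x \<partial>M)) + ennreal s * (of_nat B * (\<integral>\<^sup>+x. indicator (W - E) x \<partial>M))"
    proof (intro add_mono mult_left_mono)
      show "(\<Sum>i. indicator I i * T1 i) \<le> of_nat B * (\<integral>\<^sup>+x. indicator W x \<partial>M)"
        unfolding T1_def using Ws by (intro overlap_upper[OF Qsm _ ov]) auto
      show "(\<Sum>i. indicator I i * T2 i) \<le> of_nat B * (\<integral>\<^sup>+x. indicator (W - E) x \<partial>M)"
        unfolding T2_def using WEs by (intro overlap_upper[OF Qsm _ ov]) auto
    qed auto
    also have "\<dots> = ennreal (C' * s * B * measure M W + s * B * measure M (W - E))"
      using nn_ind1[OF Ws WQ] nn_ind1[OF WEs] C'0 s0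
      by (simp add: ennreal_plus ennreal_mult ennreal_of_nat_eq_real_of_nat mult.assoc)
    also have "\<dots> \<le> ennreal (C' * s * B * measure M E + (C' * s * B + s * B) * \<delta>)"
    proof (rule ennreal_leI)
      have "C' * s * B * measure M W \<le> C' * s * B * (measure M E + \<delta>)"
        using muW C'0 s0 by (intro mult_left_mono) auto
      moreover have "s * B * measure M (W - E) \<le> s * B * \<delta>"
        using muWE s0 by (intro mult_left_mono) auto
      ultimately show "C' * s * B * measure M W + s * B * measure M (W - E) \<le> C' * s * B * measure M E + (C' * s * B + s * B) * \<delta>"
        by (simp add: algebra_simps)
    qed
    finally show ?thesis
      using C'0 s0 d by (subst (asm) ennreal_le_iff) (auto intro!: add_nonneg_nonneg mult_nonneg_nonneg)
  qed
  have d0: "0 < (r' - rho) * mQ" using r'1 mQ0 by simp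
  have "(LINT x|M. \<phi> x) \<le> C' * s * B * measure M E"
    by (rule le_eps_lemma[OF d0 _ claim]) (use C'0 s0 in auto)
  also have "\<dots> \<le> C * s * B * measure M E"
    using C'C s0 by (intro mult_right_mono) auto
  finally show ?thesis unfolding \<phi>_def E_def s_def C_def by (simp add: algebra_simps)
qed

end

theorem theorem2:
  fixes M :: "(real ^ 'n) measure" and Q0 :: "(real ^ 'n) set"
    and f :: "real ^ 'n \<Rightarrow> real" and B :: nat and eps lam rho t :: real
  assumes "covering_constant B TYPE('n)"
    and "admissible_measure M"
    and "is_cube Q0" and "0 < emeasure M Q0" and "emeasure M Q0 < \<infinity>"
    and "0 < eps" and "eps < 2"
    and "GR M Q0 eps f"
    and "eps < lam" and "lam < 2"
    and "0 < rho" and "rho < 1 - lam / 2"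
    and "0 < t" and "t \<le> rho * measure M Q0"
  shows "rearr2 M Q0 f t \<le> (real B * ((lam / rho + 1) / (lam - eps)) * eps + 1) * rearr M Q0 f t"
proof -
  note cov = assms(1) and adm = assms(2) and cube = assms(3) and pos = assms(4) and fin = assms(5)
  note e = assms(6) assms(9) and r = assms(11) assms(12) and tt = assms(13) assms(14)
  have sM: "sets M = sets borel" using adm by (simp add: admissible_measure_def)
  obtain a0 l where Q0eq: "Q0 = cbox a0 (a0 + l *\<^sub>R One)" using cube unfolding is_cube_def by auto
  have Q0s: "Q0 \<in> sets M" using Q0eq sM by simp
  have bQ0: "bounded Q0" using Q0eq by simp
  have fnn: "\<And>x. x \<in> Q0 \<Longrightarrow> 0 \<le> f x" and fint: "set_integrable M Q0 f"
    and GRQ: "\<And>Q. is_cube Q \<Longrightarrow> Q \<subseteq> Q0 \<Longrightarrow> 0 < measure M Q \<Longrightarrow> osc M Q f \<le> eps * avg M Q f"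
    using assms(8) unfolding GR_def by auto
  interpret G: GRset M Q0 f
    using adm Q0s bQ0 fin fnn fint by unfold_locales auto
  define s where "s = rearr M Q0 f t"
  define E where "E = {x\<in>Q0. s < f x}"
  define a where "a = measure M E"
  define C where "C = eps * (lam / rho + 1) / (lam - eps)"
  define mQ where "mQ = measure M Q0"
  have "emeasure M Q0 = ennreal mQ" using fin by (simp add: mQ_def emeasure_eq_ennreal_measure)
  with pos have mQ0: "0 < mQ" by simp
  have tQ: "t \<le> mQ"
  proof -
    have "rho < 1" using r e by linarith
    then have "rho * mQ \<le> mQ" using mQ0 by simp
    then show ?thesis using tt by (simp add: mQ_def)
  qed
  have s0: "0 \<le> s" unfolding s_def using tt(1) tQ by (intro G.rearr_nonneg) (auto simp: mQ_def)
  have Es: "E \<in> sets M" unfolding E_def by (rule G.Lc_sets)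
  have EQ: "E \<subseteq> Q0" unfolding E_def by auto
  have aE: "a \<le> t" unfolding a_def E_def s_def using tt(1) tQ by (intro G.level) (auto simp: mQ_def)
  have C0: "0 \<le> C" unfolding C_def using e r by (intro divide_nonneg_pos mult_nonneg_nonneg) auto
  have main: "(LINT x|M. indicator E x * (f x - s)) \<le> real B * C * s * a"
    using G.main_est[OF cov cube pos GRQ e r tt] unfolding E_def s_def a_def C_def .
  have LB: "(LBINT \<tau>=0..t. rearr M Q0 f \<tau>) = (LINT \<tau>|lborel. indicator {0<..<t} \<tau> * rearr M Q0 f \<tau>)"
  proof -
    have "einterval 0 (ereal t) = {0<..<t}" by (auto simp: einterval_def)
    then show ?thesis using tt(1) by (simp add: interval_lebesgue_integral_def set_lebesgue_integral_def)
  qed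
  have key: "(LBINT \<tau>=0..t. rearr M Q0 f \<tau>) \<le> t * s * (real B * C + 1)"
  proof (cases "integrable lborel (\<lambda>\<tau>. indicator {0<..<t} \<tau> * rearr M Q0 f \<tau>)")
    case True
    have "(LBINT \<tau>=0..t. rearr M Q0 f \<tau>) \<le>
       (LINT x|M. indicator E x * (indicator Q0 x * f x)) + (t - a) * s"
      unfolding LB E_def a_def s_def by (rule G.integral_compare[OF tt(1) _ True]) (use tQ in \<open>simp add: mQ_def\<close>)
    also have "(LINT x|M. indicator E x * (indicator Q0 x * f x)) = (LINT x|M. indicator E x * f x)"
      using EQ by (intro Bochner_Integration.integral_cong) (auto simp: indicator_def)
    also have "\<dots> = (LINT x|M. indicator E x * (f x - s)) + s * a"
      using G.intD(2)[OF Es EQ, of s] by (simp add: a_def)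
    finally have "(LBINT \<tau>=0..t. rearr M Q0 f \<tau>) \<le> real B * C * s * a + s * a + (t - a) * s"
      using main by linarith
    also have "\<dots> = t * s + real B * C * s * a" by (simp add: algebra_simps)
    also have "\<dots> \<le> t * s + real B * C * s * t"
      using aE C0 s0 by (intro add_left_mono mult_left_mono) auto
    also have "\<dots> = t * s * (real B * C + 1)" by (simp add: algebra_simps)
    finally show ?thesis .
  next
    case False
    then have "(LBINT \<tau>=0..t. rearr M Q0 f \<tau>) = 0" unfolding LB by (rule not_integrable_integral_eq)
    then show ?thesis using tt(1) s0 C0 by simp
  qed
  have "rearr2 M Q0 f t = (1 / t) * (LBINT \<tau>=0..t. rearr M Q0 f \<tau>)" by (simp add: rearr2_def)
  also have "\<dots> \<le> (1 / t) * (t * s * (real B * C + 1))"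
    using key tt(1) by (intro mult_left_mono) auto
  also have "\<dots> = (real B * ((lam / rho + 1) / (lam - eps)) * eps + 1) * rearr M Q0 f t"
    using tt(1) by (simp add: C_def s_def field_simps)
  finally show ?thesis .
qed

end
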